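(* Let $q>0$, $q\neq1$, $M\ge2$, and let $G_q=SO_q(N)$ ($N\ge3$) or $Sp_q(n)$ ($N=2n$, $n\ge2$) with braid matrix $\hat R$, and $\hat R_M$ the braid matrix of $SL_q(M)$. Then each of $\hat R_M\otimes\hat R$ and $\hat R_M^{-1}\otimes\hat R$ has at least two distinct positive and at least two distinct negative eigenvalues (namely $q^2,q^{-2},-1,\pm q^{2-N},\mp q^{-N}$ for $\hat R_M\otimes\hat R$ and $-q^2,-q^{-2},1,\mp q^{2-N},\pm q^{-N}$ for $\hat R_M^{-1}\otimes\hat R$, upper signs for $SO_q(N)$, lower for $Sp_q(n)$). Consequently, by Lemma 1, there is no $GL_q(M)\times G_q$-covariant $q$-deformed Weyl or Clifford algebra with generators $A^A,A^+_A$ ($A=(\alpha,a)$) built from $\hat{\mathsf R}=\hat R_M^{\pm1}\otimes\hat R$ in the manner of Lemma 1 that has the same Poincaré series as its classical counterpart.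
   Context: For $SO_q(N)$: $\hat R=q\mathcal P^s-q^{-1}\mathcal P^a+q^{1-N}\mathcal P^t$; for $Sp_q(n)$: $\hat R=q\mathcal P^{s'}-q^{-1}\mathcal P^{a'}-q^{1-N}\mathcal P^{t'}$ (orthogonal projectors summing to the identity); $\hat R_M=q\mathcal P^S_M-q^{-1}\mathcal P^A_M$; $(X_M\otimes Y)^{AB}_{CD}=(X_M)^{\alpha\beta}_{\gamma\delta}Y^{ab}_{cd}$, and products of these projectors are the spectral projectors of $\hat R_M^{\pm1}\otimes\hat R$. Lemma 1: given a braid matrix $\hat{\mathsf R}=\sum_\mu\lambda_\mu\mathsf P^\mu$ (distinct $\lambda_\mu$), an algebra with relations $\sum(\mathsf P^\mp)^{CD}_{AB}A^+_CA^+_D=0$, $\sum(\mathsf P^\mp)^{AB}_{CD}A^DA^C=0$, $A^AA^+_B=\delta^A_B\mathbf 1\pm\sum S^{AC}_{BD}A^+_CA^D$ ($S$ numerical, $\mathsf P^\pm$ = sums of spectral projectors with positive/negative eigenvalue; upper sign Weyl, lower Clifford) can have the classical Poincaré series only if $\hat{\mathsf R}$ has exactly one negative (Weyl) resp. exactly one positive (Clifford) eigenvalue. *)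

theory Defs
  imports "HOL-Analysis.Analysis"
begin

text \<open>Real square matrices indexed by a finite type are 'real ^ 'i ^ 'i'.
  A braid matrix on V (x) V with dim V = N is indexed by pairs ('n * 'n).\<close>

definition is_eigenvalue :: "real ^ 'i::finite ^ 'i \<Rightarrow> real \<Rightarrow> bool" where
  "is_eigenvalue A c \<longleftrightarrow> (\<exists>v. v \<noteq> 0 \<and> A *v v = c *\<^sub>R v)"

definition spectrum_mat :: "real ^ 'i::finite ^ 'i \<Rightarrow> real set" where
  "spectrum_mat A = {c. is_eigenvalue A c}"

definition orth_proj :: "real ^ 'i::finite ^ 'i \<Rightarrow> bool" where
  "orth_proj P \<longleftrightarrow> P ** P = P \<and> transpose P = P"

text \<open>Tensor product (X_M (x) Y)^{AB}_{CD} = (X_M)^{alpha beta}_{gamma delta} Y^{ab}_{cd},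
  with A = (alpha,a), B = (beta,b), C = (gamma,c), D = (delta,d).
  Row index (A,B), column index (C,D).\<close>
definition tensorM ::
  "real ^ ('m::finite \<times> 'm) ^ ('m \<times> 'm) \<Rightarrow> real ^ ('n::finite \<times> 'n) ^ ('n \<times> 'n)
   \<Rightarrow> real ^ (('m \<times> 'n) \<times> ('m \<times> 'n)) ^ (('m \<times> 'n) \<times> ('m \<times> 'n))" where
  "tensorM X Y = (\<chi> AB CD. (case AB of ((\<alpha>, a), (\<beta>, b)) \<Rightarrow>
                    (case CD of ((\<gamma>, c), (\<delta>, d)) \<Rightarrow> X $ (\<alpha>, \<beta>) $ (\<gamma>, \<delta>) * Y $ (a, b) $ (c, d))))"

text \<open>Braid matrix of SL_q(M): R_M = q P^S - q^{-1} P^A, with P^S, P^A the q-symmetric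
  and q-antisymmetric orthogonal projectors (ranks M(M+1)/2 and M(M-1)/2) summing to 1.\<close>
definition SLq_braid :: "real \<Rightarrow> real ^ ('m::finite \<times> 'm) ^ ('m \<times> 'm) \<Rightarrow> bool" where
  "SLq_braid q R \<longleftrightarrow> (\<exists>PS PA. orth_proj PS \<and> orth_proj PA \<and> PS ** PA = 0 \<and> PA ** PS = 0
     \<and> PS + PA = mat 1
     \<and> rank PS = CARD('m) * (CARD('m) + 1) div 2 \<and> rank PA = CARD('m) * (CARD('m) - 1) div 2
     \<and> R = q *\<^sub>R PS - inverse q *\<^sub>R PA)"

definition SOq_braid :: "real \<Rightarrow> real ^ ('n::finite \<times> 'n) ^ ('n \<times> 'n) \<Rightarrow> bool" where
  "SOq_braid q R \<longleftrightarrow> (let N = CARD('n) in \<exists>Ps Pa Pt.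
     orth_proj Ps \<and> orth_proj Pa \<and> orth_proj Pt
     \<and> Ps ** Pa = 0 \<and> Pa ** Ps = 0 \<and> Ps ** Pt = 0 \<and> Pt ** Ps = 0 \<and> Pa ** Pt = 0 \<and> Pt ** Pa = 0
     \<and> Ps + Pa + Pt = mat 1
     \<and> rank Ps = N * (N + 1) div 2 - 1 \<and> rank Pa = N * (N - 1) div 2 \<and> rank Pt = 1
     \<and> R = q *\<^sub>R Ps - inverse q *\<^sub>R Pa + (q powi (1 - int N)) *\<^sub>R Pt)"

definition Spq_braid :: "real \<Rightarrow> real ^ ('n::finite \<times> 'n) ^ ('n \<times> 'n) \<Rightarrow> bool" where
  "Spq_braid q R \<longleftrightarrow> (let N = CARD('n) in \<exists>Ps Pa Pt.
     orth_proj Ps \<and> orth_proj Pa \<and> orth_proj Pt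
     \<and> Ps ** Pa = 0 \<and> Pa ** Ps = 0 \<and> Ps ** Pt = 0 \<and> Pt ** Ps = 0 \<and> Pa ** Pt = 0 \<and> Pt ** Pa = 0
     \<and> Ps + Pa + Pt = mat 1
     \<and> rank Ps = N * (N + 1) div 2 \<and> rank Pa = N * (N - 1) div 2 - 1 \<and> rank Pt = 1
     \<and> R = q *\<^sub>R Ps - inverse q *\<^sub>R Pa - (q powi (1 - int N)) *\<^sub>R Pt)"

definition two_pos_two_neg :: "real ^ 'i::finite ^ 'i \<Rightarrow> bool" where
  "two_pos_two_neg A \<longleftrightarrow>
     (\<exists>x y. x \<noteq> y \<and> 0 < x \<and> 0 < y \<and> is_eigenvalue A x \<and> is_eigenvalue A y) \<and>
     (\<exists>x y. x \<noteq> y \<and> x < 0 \<and> y < 0 \<and> is_eigenvalue A x \<and> is_eigenvalue A y)"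

text \<open>Hypothesis of Lemma 1 (necessary condition for classical Poincare series):
  exactly one negative eigenvalue (Weyl) resp. exactly one positive eigenvalue (Clifford).\<close>
definition lemma1_weyl_ok :: "real ^ 'i::finite ^ 'i \<Rightarrow> bool" where
  "lemma1_weyl_ok A \<longleftrightarrow> (\<exists>!c. c < 0 \<and> is_eigenvalue A c)"

definition lemma1_clifford_ok :: "real ^ 'i::finite ^ 'i \<Rightarrow> bool" where
  "lemma1_clifford_ok A \<longleftrightarrow> (\<exists>!c. 0 < c \<and> is_eigenvalue A c)"

end

theory Submission imports Defs begin

lemma sum_mvec: "(sum f K) *v (x::real^'i::finite) = (\<Sum>k\<in>K. f k *v x)"
  by (induction K rule: infinite_finite_induct) (simp_all add: matrix_vector_mult_add_rdistrib)

lemma mm_scaleR_left: "((c::real) *\<^sub>R (A::real^'j::finite^'i)) ** B = c *\<^sub>R (A ** B)"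
  by (simp add: matrix_matrix_mult_def vec_eq_iff sum_distrib_left mult_ac real_scaleR_def)

lemma mm_scaleR_right: "(A::real^'j::finite^'i) ** ((c::real) *\<^sub>R B) = c *\<^sub>R (A ** B)"
  by (simp add: matrix_matrix_mult_def vec_eq_iff sum_distrib_left mult_ac real_scaleR_def)

lemma mm_add_left: "((A::real^'j::finite^'i) + B) ** C = A ** C + B ** C"
  by (simp add: matrix_matrix_mult_def vec_eq_iff sum.distrib algebra_simps)

lemma mm_diff_left: "((A::real^'j::finite^'i) - B) ** C = A ** C - B ** C"
  by (simp add: matrix_matrix_mult_def vec_eq_iff sum_subtractf algebra_simps)

lemma mm_diff_right: "(A::real^'j::finite^'i) ** (B - C) = A ** B - A ** C"
  by (simp add: matrix_matrix_mult_def vec_eq_iff sum_subtractf algebra_simps)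

lemma mm_zero_left: "(0::real^'j::finite^'i) ** C = 0"
  by (simp add: matrix_matrix_mult_def vec_eq_iff)

lemma mm_zero_right: "(C::real^'j::finite^'i) ** 0 = 0"
  by (simp add: matrix_matrix_mult_def vec_eq_iff)

lemma mm_sum_left: "(A::real^'j::finite^'i) ** sum f K = (\<Sum>k\<in>K. A ** f k)"
  by (induction K rule: infinite_finite_induct) (simp_all add: matrix_add_ldistrib mm_zero_right)

lemma mm_sum_right: "sum f K ** (A::real^'j::finite^'i) = (\<Sum>k\<in>K. f k ** A)"
  by (induction K rule: infinite_finite_induct) (simp_all add: mm_add_left mm_zero_left)

lemma spec_decomp:
  fixes E :: "'k \<Rightarrow> real^'i::finite^'i" and c :: "'k \<Rightarrow> real"
  assumes fin: "finite K"
    and idem: "\<And>k. k\<in>K \<Longrightarrow> E k ** E k = E k"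
    and orth: "\<And>j k. j\<in>K \<Longrightarrow> k\<in>K \<Longrightarrow> j\<noteq>k \<Longrightarrow> E j ** E k = 0"
    and tot: "sum E K = mat 1"
    and A: "A = (\<Sum>k\<in>K. c k *\<^sub>R E k)"
  shows "spectrum_mat A = c ` {k\<in>K. E k \<noteq> 0}"
proof -
  have EA: "E j ** A = c j *\<^sub>R E j" if "j\<in>K" for j
  proof -
    have "E j ** A = (\<Sum>k\<in>K. c k *\<^sub>R (E j ** E k))" by (simp add: A mm_sum_left mm_scaleR_right)
    also have "\<dots> = (\<Sum>k\<in>K. if k = j then c j *\<^sub>R E j else 0)"
      by (rule sum.cong) (auto simp: idem orth that)
    also have "\<dots> = c j *\<^sub>R E j" using fin that by (simp add: sum.delta)
    finally show ?thesis .
  qed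
  have AE: "A ** E j = c j *\<^sub>R E j" if "j\<in>K" for j
  proof -
    have "A ** E j = (\<Sum>k\<in>K. c k *\<^sub>R (E k ** E j))" by (simp add: A mm_sum_right mm_scaleR_left)
    also have "\<dots> = (\<Sum>k\<in>K. if k = j then c j *\<^sub>R E j else 0)"
      by (rule sum.cong) (auto simp: idem orth that)
    also have "\<dots> = c j *\<^sub>R E j" using fin that by (simp add: sum.delta)
    finally show ?thesis .
  qed
  show ?thesis
  proof (rule set_eqI, rule iffI)
    fix x assume "x \<in> spectrum_mat A"
    then obtain v where v: "v \<noteq> 0" "A *v v = x *\<^sub>R v" by (auto simp: spectrum_mat_def is_eigenvalue_def)
    have "v = (\<Sum>k\<in>K. E k *v v)" using tot sum_mvec by (metis matrix_vector_mul_lid)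
    then obtain j where j: "j\<in>K" "E j *v v \<noteq> 0" using v(1) by (metis (mono_tags, lifting) sum.neutral)
    have "E j *v (A *v v) = c j *\<^sub>R (E j *v v)"
      by (simp add: matrix_vector_mul_assoc scaleR_matrix_vector_assoc EA[OF j(1)])
    moreover have "E j *v (A *v v) = x *\<^sub>R (E j *v v)" using v(2) by (simp add: matrix_vector_mult_scaleR)
    ultimately have "x = c j" using j(2) by (metis scaleR_cancel_right)
    moreover have "E j \<noteq> 0" using j(2) by auto
    ultimately show "x \<in> c ` {k\<in>K. E k \<noteq> 0}" using j(1) by auto
  next
    fix x assume "x \<in> c ` {k\<in>K. E k \<noteq> 0}"
    then obtain j where j: "j\<in>K" "E j \<noteq> 0" "x = c j" by auto
    then obtain u where u: "E j *v u \<noteq> 0" using matrix_eq[of "E j" 0] by auto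
    have "A *v (E j *v u) = x *\<^sub>R (E j *v u)"
      by (simp add: matrix_vector_mul_assoc scaleR_matrix_vector_assoc AE[OF j(1)] j(3))
    then show "x \<in> spectrum_mat A" using u by (auto simp: spectrum_mat_def is_eigenvalue_def)
  qed
qed


lemma tensorM_nth [simp]:
  "tensorM X Y $ ((\<alpha>,a),(\<beta>,b)) $ ((\<gamma>,c),(\<delta>,d)) = X$(\<alpha>,\<beta>)$(\<gamma>,\<delta>) * Y$(a,b)$(c,d)"
  by (simp add: tensorM_def)

lemma sum_pair_univ: "(\<Sum>p\<in>UNIV. F p) = (\<Sum>x\<in>(UNIV::'a::finite set). \<Sum>y\<in>(UNIV::'b::finite set). F (x,y))"
proof -
  have "(\<Sum>p\<in>UNIV. F p) = (\<Sum>p\<in>UNIV \<times> UNIV. F p)" by simp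
  also have "\<dots> = (\<Sum>x\<in>UNIV. \<Sum>y\<in>UNIV. F (x,y))"
    by (simp add: sum.cartesian_product split_def)
  finally show ?thesis .
qed

lemma tensorM_mult:
  fixes X X' :: "real ^ ('m::finite \<times> 'm) ^ ('m \<times> 'm)" and Y Y' :: "real ^ ('n::finite \<times> 'n) ^ ('n \<times> 'n)"
  shows "tensorM X Y ** tensorM X' Y' = tensorM (X ** X') (Y ** Y')"
proof -
  have "(tensorM X Y ** tensorM X' Y') $ ((\<alpha>,a),(\<beta>,b)) $ ((\<gamma>',c'),(\<delta>',d'))
      = tensorM (X ** X') (Y ** Y') $ ((\<alpha>,a),(\<beta>,b)) $ ((\<gamma>',c'),(\<delta>',d'))" for \<alpha> a \<beta> b \<gamma>' c' \<delta>' d'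
  proof -
    have "(tensorM X Y ** tensorM X' Y') $ ((\<alpha>,a),(\<beta>,b)) $ ((\<gamma>',c'),(\<delta>',d'))
      = (\<Sum>\<gamma>\<in>UNIV. \<Sum>c\<in>UNIV. \<Sum>\<delta>\<in>UNIV. \<Sum>d\<in>UNIV.
           (X$(\<alpha>,\<beta>)$(\<gamma>,\<delta>) * X'$(\<gamma>,\<delta>)$(\<gamma>',\<delta>')) * (Y$(a,b)$(c,d) * Y'$(c,d)$(c',d')))"
      by (simp add: matrix_matrix_mult_def sum_pair_univ[where F="\<lambda>p. _ p"] mult_ac)
    also have "\<dots> = (\<Sum>\<gamma>\<in>UNIV. \<Sum>\<delta>\<in>UNIV. \<Sum>c\<in>UNIV. \<Sum>d\<in>UNIV.
           (X$(\<alpha>,\<beta>)$(\<gamma>,\<delta>) * X'$(\<gamma>,\<delta>)$(\<gamma>',\<delta>')) * (Y$(a,b)$(c,d) * Y'$(c,d)$(c',d')))"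
      by (rule sum.cong[OF refl], rule sum.swap)
    also have "\<dots> = (\<Sum>\<gamma>\<in>UNIV. \<Sum>\<delta>\<in>UNIV. X$(\<alpha>,\<beta>)$(\<gamma>,\<delta>) * X'$(\<gamma>,\<delta>)$(\<gamma>',\<delta>'))
                 * (\<Sum>c\<in>UNIV. \<Sum>d\<in>UNIV. Y$(a,b)$(c,d) * Y'$(c,d)$(c',d'))"
      by (simp only: sum_distrib_right) (simp only: sum_distrib_left)
    also have "\<dots> = tensorM (X ** X') (Y ** Y') $ ((\<alpha>,a),(\<beta>,b)) $ ((\<gamma>',c'),(\<delta>',d'))"
      by (simp add: matrix_matrix_mult_def sum_pair_univ[where F="\<lambda>p. _ p"])
    finally show ?thesis .
  qed
  then show ?thesis by (simp add: vec_eq_iff)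
qed

lemma tensorM_add_left: "tensorM (X + X') Y = tensorM X Y + tensorM X' Y"
  by (simp add: vec_eq_iff algebra_simps)
lemma tensorM_add_right: "tensorM X (Y + Y') = tensorM X Y + tensorM X Y'"
  by (simp add: vec_eq_iff algebra_simps)
lemma tensorM_scaleR_left: "tensorM (c *\<^sub>R X) Y = c *\<^sub>R tensorM X Y"
  by (simp add: vec_eq_iff algebra_simps)
lemma tensorM_scaleR_right: "tensorM X (c *\<^sub>R Y) = c *\<^sub>R tensorM X Y"
  by (simp add: vec_eq_iff algebra_simps)
lemma tensorM_zero_left: "tensorM 0 Y = 0"
  by (simp add: vec_eq_iff)
lemma tensorM_zero_right: "tensorM X 0 = 0"
  by (simp add: vec_eq_iff)
lemma tensorM_id: "tensorM (mat 1) (mat 1) = mat 1"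
  by (simp add: vec_eq_iff mat_def)
lemma tensorM_nonzero:
  assumes "X \<noteq> 0" "Y \<noteq> 0" shows "tensorM X Y \<noteq> 0"
proof -
  obtain \<alpha> \<beta> \<gamma> \<delta> where 1: "X$(\<alpha>,\<beta>)$(\<gamma>,\<delta>) \<noteq> 0" using assms(1) by (auto simp: vec_eq_iff)
  obtain a b c d where 2: "Y$(a,b)$(c,d) \<noteq> 0" using assms(2) by (auto simp: vec_eq_iff)
  have "tensorM X Y $ ((\<alpha>,a),(\<beta>,b)) $ ((\<gamma>,c),(\<delta>,d)) \<noteq> 0" using 1 2 by simp
  then show ?thesis by (metis zero_index)
qed


lemma tensor_spec:
  fixes P0 P1 :: "real ^ ('m::finite \<times> 'm) ^ ('m \<times> 'm)"
    and Q0 Q1 Q2 :: "real ^ ('n::finite \<times> 'n) ^ ('n \<times> 'n)"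
  assumes p: "P0 ** P0 = P0" "P1 ** P1 = P1" "P0 ** P1 = 0" "P1 ** P0 = 0" "P0 + P1 = mat 1"
      "P0 \<noteq> 0" "P1 \<noteq> 0"
    and q: "Q0 ** Q0 = Q0" "Q1 ** Q1 = Q1" "Q2 ** Q2 = Q2"
      "Q0 ** Q1 = 0" "Q1 ** Q0 = 0" "Q0 ** Q2 = 0" "Q2 ** Q0 = 0" "Q1 ** Q2 = 0" "Q2 ** Q1 = 0"
      "Q0 + Q1 + Q2 = mat 1" "Q0 \<noteq> 0" "Q1 \<noteq> 0" "Q2 \<noteq> 0"
  shows "spectrum_mat (tensorM (l0 *\<^sub>R P0 + l1 *\<^sub>R P1) (m0 *\<^sub>R Q0 + m1 *\<^sub>R Q1 + m2 *\<^sub>R Q2))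
    = {l0*m0, l0*m1, l0*m2, l1*m0, l1*m1, l1*m2}"
proof -
  define PP where "PP = (\<lambda>i::nat. if i = 0 then P0 else P1)"
  define QQ where "QQ = (\<lambda>j::nat. if j = 0 then Q0 else if j = 1 then Q1 else Q2)"
  define ll where "ll = (\<lambda>i::nat. if i = 0 then l0 else l1)"
  define mm where "mm = (\<lambda>j::nat. if j = 0 then m0 else if j = 1 then m1 else m2)"
  define E where "E = (\<lambda>(i,j). tensorM (PP i) (QQ j))"
  define c where "c = (\<lambda>(i,j). ll i * mm j)"
  define K :: "(nat \<times> nat) set" where "K = {(0,0),(0,1),(0,2),(1,0),(1,1),(1,2)}"
  have "spectrum_mat (tensorM (l0 *\<^sub>R P0 + l1 *\<^sub>R P1) (m0 *\<^sub>R Q0 + m1 *\<^sub>R Q1 + m2 *\<^sub>R Q2))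
      = c ` {k\<in>K. E k \<noteq> 0}"
  proof (rule spec_decomp)
    show "finite K" by (simp add: K_def)
    show "E k ** E k = E k" if "k \<in> K" for k
      using that p q by (auto simp: K_def E_def PP_def QQ_def tensorM_mult)
    show "E j ** E k = 0" if "j \<in> K" "k \<in> K" "j \<noteq> k" for j k
      using that p q by (auto simp: K_def E_def PP_def QQ_def tensorM_mult tensorM_zero_left tensorM_zero_right)
    have "sum E K = tensorM (P0 + P1) (Q0 + Q1 + Q2)"
      by (simp add: K_def E_def PP_def QQ_def tensorM_add_left tensorM_add_right add_ac)
    then show "sum E K = mat 1" by (simp add: p(5) q(10) tensorM_id)
    show "tensorM (l0 *\<^sub>R P0 + l1 *\<^sub>R P1) (m0 *\<^sub>R Q0 + m1 *\<^sub>R Q1 + m2 *\<^sub>R Q2) = (\<Sum>k\<in>K. c k *\<^sub>R E k)"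
      by (simp add: K_def E_def PP_def QQ_def c_def ll_def mm_def
          tensorM_add_left tensorM_add_right tensorM_scaleR_left tensorM_scaleR_right scaleR_add_right add_ac mult_ac)
  qed
  also have "{k\<in>K. E k \<noteq> 0} = K"
    using p q by (auto simp: K_def E_def PP_def QQ_def tensorM_nonzero)
  also have "c ` K = {l0*m0, l0*m1, l0*m2, l1*m0, l1*m1, l1*m2}"
    by (simp add: K_def c_def ll_def mm_def)
  finally show ?thesis .
qed


lemma powi_inj:
  fixes q :: real assumes "0 < q" "q \<noteq> 1" "q powi a = q powi b" shows "a = b"
proof -
  have "q powr real_of_int a = q powr real_of_int b"
    using assms by (simp add: powr_real_of_int')
  then show ?thesis using powr_inj[OF assms(1,2)] by simp
qed

lemma powi_facts:
  fixes q :: real and N :: nat assumes "0 < q"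
  shows "q * q = q powi 2" "q * (- inverse q) = -1" "- inverse q * q = -1"
    "q * q powi (1 - int N) = q powi (2 - int N)"
    "- inverse q * - inverse q = q powi (-2)"
    "- inverse q * q powi (1 - int N) = - (q powi (- int N))"
    "inverse q * q = 1" "inverse q * - inverse q = - (q powi (-2))"
    "inverse q * q powi (1 - int N) = q powi (- int N)"
    "- q * q = - (q powi 2)" "- q * - inverse q = 1"
    "- q * q powi (1 - int N) = - (q powi (2 - int N))"
    "q * - (q powi (1 - int N)) = - (q powi (2 - int N))"
    "- inverse q * - (q powi (1 - int N)) = q powi (- int N)"
    "inverse q * - (q powi (1 - int N)) = - (q powi (- int N))"
    "- q * - (q powi (1 - int N)) = q powi (2 - int N)"
    "q ^ 2 = q powi 2"
proof -
  have q0: "q \<noteq> 0" using assms by simp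
  have a: "q powi (2 - int N) = q * q powi (1 - int N)"
    using power_int_add[of q 1 "1 - int N"] q0 by simp
  have b: "q powi (1 - int N) = q * q powi (- int N)"
    using power_int_add[of q 1 "- int N"] q0 by simp
  have c: "q powi (-2) = inverse q * inverse q"
    by (simp add: power_int_minus power2_eq_square)
  show "q * q = q powi 2" "q * (- inverse q) = -1" "- inverse q * q = -1"
    "q * q powi (1 - int N) = q powi (2 - int N)"
    "- inverse q * - inverse q = q powi (-2)"
    "- inverse q * q powi (1 - int N) = - (q powi (- int N))"
    "inverse q * q = 1" "inverse q * - inverse q = - (q powi (-2))"
    "inverse q * q powi (1 - int N) = q powi (- int N)"
    "- q * q = - (q powi 2)" "- q * - inverse q = 1"
    "- q * q powi (1 - int N) = - (q powi (2 - int N))"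
    "q * - (q powi (1 - int N)) = - (q powi (2 - int N))"
    "- inverse q * - (q powi (1 - int N)) = q powi (- int N)"
    "inverse q * - (q powi (1 - int N)) = - (q powi (- int N))"
    "- q * - (q powi (1 - int N)) = q powi (2 - int N)"
    "q ^ 2 = q powi 2"
    using q0 by (simp_all add: a b c power2_eq_square)
qed


lemma minv_eq:
  fixes A B :: "real^'i::finite^'i"
  assumes "A ** B = mat 1" "B ** A = mat 1" shows "matrix_inv A = B"
proof -
  let ?A' = "matrix_inv A"
  have "A ** ?A' = mat 1 \<and> ?A' ** A = mat 1"
    unfolding matrix_inv_def by (rule someI[of _ B]) (use assms in simp)
  then have "?A' = ?A' ** (A ** B)" using assms by simp
  also have "\<dots> = B" using \<open>A ** ?A' = mat 1 \<and> ?A' ** A = mat 1\<close> by (simp add: matrix_mul_assoc)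
  finally show ?thesis .
qed

lemma rank_pos_nz: "rank (P::real^'j::finite^'i::finite) = k \<Longrightarrow> 0 < k \<Longrightarrow> P \<noteq> 0"
  by auto

lemma SL_data:
  fixes q :: real and RM :: "real ^ ('m::finite \<times> 'm) ^ ('m \<times> 'm)"
  assumes "0 < q" "CARD('m) \<ge> 2" "SLq_braid q RM"
  obtains PS PA where "PS ** PS = PS" "PA ** PA = PA" "PS ** PA = 0" "PA ** PS = 0" "PS + PA = mat 1"
      "PS \<noteq> 0" "PA \<noteq> 0"
      "RM = q *\<^sub>R PS + (- inverse q) *\<^sub>R PA"
      "matrix_inv RM = inverse q *\<^sub>R PS + (- q) *\<^sub>R PA"
proof -
  let ?M = "CARD('m)"
  obtain PS PA where h: "orth_proj PS" "orth_proj PA" "PS ** PA = 0" "PA ** PS = 0"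
     "PS + PA = mat 1"
     "rank PS = ?M * (?M + 1) div 2" "rank PA = ?M * (?M - 1) div 2"
     "RM = q *\<^sub>R PS - inverse q *\<^sub>R PA"
    using assms(3) unfolding SLq_braid_def by blast
  have m1: "?M * (?M - 1) \<ge> 2 * 1" using assms(2) by (intro mult_le_mono) auto
  have m2: "?M * (?M + 1) \<ge> 2 * 1" using assms(2) by (intro mult_le_mono) auto
  have nz: "PS \<noteq> 0" "PA \<noteq> 0"
    using h(6,7) m1 m2 by (auto intro!: rank_pos_nz)
  have i: "PS ** PS = PS" "PA ** PA = PA" using h(1,2) by (auto simp: orth_proj_def)
  have R: "RM = q *\<^sub>R PS + (- inverse q) *\<^sub>R PA" using h(8) by simp
  have q0: "q \<noteq> 0" using assms(1) by simp
  have "matrix_inv RM = inverse q *\<^sub>R PS + (- q) *\<^sub>R PA"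
  proof (rule minv_eq)
    show "RM ** (inverse q *\<^sub>R PS + (- q) *\<^sub>R PA) = mat 1"
      unfolding R by (simp only: matrix_add_ldistrib mm_add_left mm_scaleR_left mm_scaleR_right i h(3,4))
        (simp add: q0 h(5))
    show "(inverse q *\<^sub>R PS + (- q) *\<^sub>R PA) ** RM = mat 1"
      unfolding R by (simp only: matrix_add_ldistrib mm_add_left mm_scaleR_left mm_scaleR_right i h(3,4))
        (simp add: q0 h(5))
  qed
  then show ?thesis using that i h(3,4,5) nz R by blast
qed


lemma G_data:
  fixes q :: real and R :: "real ^ ('n::finite \<times> 'n) ^ ('n \<times> 'n)"
  assumes "CARD('n) \<ge> 3" and "(SOq_braid q R \<and> s = 1) \<or> (Spq_braid q R \<and> s = -1)"
  obtains Ps Pa Pt where "Ps ** Ps = Ps" "Pa ** Pa = Pa" "Pt ** Pt = Pt"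
      "Ps ** Pa = 0" "Pa ** Ps = 0" "Ps ** Pt = 0" "Pt ** Ps = 0" "Pa ** Pt = 0" "Pt ** Pa = 0"
      "Ps + Pa + Pt = mat 1" "Ps \<noteq> 0" "Pa \<noteq> 0" "Pt \<noteq> 0"
      "R = q *\<^sub>R Ps + (- inverse q) *\<^sub>R Pa + (s * q powi (1 - int CARD('n))) *\<^sub>R Pt"
proof -
  let ?N = "CARD('n)"
  have m1: "?N * (?N - 1) \<ge> 3 * 2" using assms(1) by (intro mult_le_mono) auto
  have m2: "?N * (?N + 1) \<ge> 3 * 4" using assms(1) by (intro mult_le_mono) auto
  have d1: "?N * (?N - 1) div 2 \<ge> 3" using div_le_mono[OF m1, of 2] by simp
  have d2: "?N * (?N + 1) div 2 \<ge> 6" using div_le_mono[OF m2, of 2] by simp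
  from assms(2) show ?thesis
  proof
    assume so: "SOq_braid q R \<and> s = 1"
    then obtain Ps Pa Pt where h: "orth_proj Ps" "orth_proj Pa" "orth_proj Pt"
     "Ps ** Pa = 0" "Pa ** Ps = 0" "Ps ** Pt = 0" "Pt ** Ps = 0" "Pa ** Pt = 0" "Pt ** Pa = 0"
     "Ps + Pa + Pt = mat 1"
     "rank Ps = ?N * (?N + 1) div 2 - 1" "rank Pa = ?N * (?N - 1) div 2" "rank Pt = 1"
     "R = q *\<^sub>R Ps - inverse q *\<^sub>R Pa + (q powi (1 - int ?N)) *\<^sub>R Pt"
      unfolding SOq_braid_def Let_def by blast
    have nz: "Ps \<noteq> 0" "Pa \<noteq> 0" "Pt \<noteq> 0" using h(11,12,13) d1 d2 by (auto intro!: rank_pos_nz)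
    have i: "Ps ** Ps = Ps" "Pa ** Pa = Pa" "Pt ** Pt = Pt" using h(1,2,3) by (auto simp: orth_proj_def)
    show ?thesis using that[OF i h(4-10) nz] so h(14) by simp
  next
    assume sp: "Spq_braid q R \<and> s = -1"
    then obtain Ps Pa Pt where h: "orth_proj Ps" "orth_proj Pa" "orth_proj Pt"
     "Ps ** Pa = 0" "Pa ** Ps = 0" "Ps ** Pt = 0" "Pt ** Ps = 0" "Pa ** Pt = 0" "Pt ** Pa = 0"
     "Ps + Pa + Pt = mat 1"
     "rank Ps = ?N * (?N + 1) div 2" "rank Pa = ?N * (?N - 1) div 2 - 1" "rank Pt = 1"
     "R = q *\<^sub>R Ps - inverse q *\<^sub>R Pa - (q powi (1 - int ?N)) *\<^sub>R Pt"
      unfolding Spq_braid_def Let_def by blast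
    have nz: "Ps \<noteq> 0" "Pa \<noteq> 0" "Pt \<noteq> 0" using h(11,12,13) d1 d2 by (auto intro!: rank_pos_nz)
    have i: "Ps ** Ps = Ps" "Pa ** Pa = Pa" "Pt ** Pt = Pt" using h(1,2,3) by (auto simp: orth_proj_def)
    show ?thesis using that[OF i h(4-10) nz] sp h(14) by simp
  qed
qed

lemma G_spec:
  fixes q :: real
    and RM :: "real ^ ('m::finite \<times> 'm) ^ ('m \<times> 'm)"
    and R :: "real ^ ('n::finite \<times> 'n) ^ ('n \<times> 'n)"
  assumes "0 < q" "CARD('m) \<ge> 2" "SLq_braid q RM" "CARD('n) \<ge> 3"
    "(SOq_braid q R \<and> s = 1) \<or> (Spq_braid q R \<and> s = -1)"
  shows "spectrum_mat (tensorM RM R) =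
       {q*q, q*(- inverse q), q*(s * q powi (1 - int CARD('n))), - inverse q * q, - inverse q * - inverse q,
        - inverse q * (s * q powi (1 - int CARD('n)))}
    \<and> spectrum_mat (tensorM (matrix_inv RM) R) =
       {inverse q*q, inverse q*(- inverse q), inverse q*(s * q powi (1 - int CARD('n))), - q * q, - q * - inverse q,
        - q * (s * q powi (1 - int CARD('n)))}"
proof -
  obtain PS PA where m: "PS ** PS = PS" "PA ** PA = PA" "PS ** PA = 0" "PA ** PS = 0" "PS + PA = mat 1"
      "PS \<noteq> 0" "PA \<noteq> 0"
      "RM = q *\<^sub>R PS + (- inverse q) *\<^sub>R PA"
      "matrix_inv RM = inverse q *\<^sub>R PS + (- q) *\<^sub>R PA"
    using SL_data[OF assms(1-3)] by blast
  obtain Ps Pa Pt where g: "Ps ** Ps = Ps" "Pa ** Pa = Pa" "Pt ** Pt = Pt"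
      "Ps ** Pa = 0" "Pa ** Ps = 0" "Ps ** Pt = 0" "Pt ** Ps = 0" "Pa ** Pt = 0" "Pt ** Pa = 0"
      "Ps + Pa + Pt = mat 1" "Ps \<noteq> 0" "Pa \<noteq> 0" "Pt \<noteq> 0"
      "R = q *\<^sub>R Ps + (- inverse q) *\<^sub>R Pa + (s * q powi (1 - int CARD('n))) *\<^sub>R Pt"
    using G_data[OF assms(4,5)] by blast
  note ts = tensor_spec[OF m(1-4) m(5-7) g(1-10) g(11-13)]
  have 2: "spectrum_mat (tensorM (matrix_inv RM) R) =
       {inverse q*q, inverse q*(- inverse q), inverse q*(s * q powi (1 - int CARD('n))), - q * q, - q * - inverse q,
        - q * (s * q powi (1 - int CARD('n)))}"
    unfolding m(9) g(14) by (rule ts)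
  have 1: "spectrum_mat (tensorM RM R) =
       {q*q, q*(- inverse q), q*(s * q powi (1 - int CARD('n))), - inverse q * q, - inverse q * - inverse q,
        - inverse q * (s * q powi (1 - int CARD('n)))}"
    unfolding m(8) g(14) by (rule ts)
  show ?thesis using 1 2 by blast
qed


lemma tptn:
  assumes "spectrum_mat A = S" "a \<in> S" "b \<in> S" "a \<noteq> b" "0 < a" "0 < b"
     "c \<in> S" "d \<in> S" "c \<noteq> d" "c < 0" "d < 0"
  shows "two_pos_two_neg A"
  using assms unfolding two_pos_two_neg_def spectrum_mat_def by blast

lemma tptn_not: "two_pos_two_neg A \<Longrightarrow> \<not> lemma1_weyl_ok A \<and> \<not> lemma1_clifford_ok A"
  unfolding two_pos_two_neg_def lemma1_weyl_ok_def lemma1_clifford_ok_def by blast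

theorem mainTheorem9:
  fixes q :: real
    and RM :: "real ^ ('m::finite \<times> 'm) ^ ('m \<times> 'm)"
    and R :: "real ^ ('n::finite \<times> 'n) ^ ('n \<times> 'n)"
  assumes q_pos: "0 < q" and q_ne1: "q \<noteq> 1"
    and M_ge2: "CARD('m) \<ge> 2"
    and hRM: "SLq_braid q RM"
    and hG: "(CARD('n) \<ge> 3 \<and> SOq_braid q R) \<or>
             (even (CARD('n)) \<and> CARD('n) \<ge> 4 \<and> Spq_braid q R)"
  shows "(SOq_braid q R \<longrightarrow>
            spectrum_mat (tensorM RM R) =
              {q ^ 2, q powi (-2), -1, q powi (2 - int CARD('n)), - (q powi (- int CARD('n)))}
          \<and> spectrum_mat (tensorM (matrix_inv RM) R) =
              {- (q ^ 2), - (q powi (-2)), 1, - (q powi (2 - int CARD('n))), q powi (- int CARD('n))})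
       \<and> (Spq_braid q R \<longrightarrow>
            spectrum_mat (tensorM RM R) =
              {q ^ 2, q powi (-2), -1, - (q powi (2 - int CARD('n))), q powi (- int CARD('n))}
          \<and> spectrum_mat (tensorM (matrix_inv RM) R) =
              {- (q ^ 2), - (q powi (-2)), 1, q powi (2 - int CARD('n)), - (q powi (- int CARD('n)))})
       \<and> two_pos_two_neg (tensorM RM R)
       \<and> two_pos_two_neg (tensorM (matrix_inv RM) R)
       \<and> \<not> lemma1_weyl_ok (tensorM RM R) \<and> \<not> lemma1_clifford_ok (tensorM RM R)
       \<and> \<not> lemma1_weyl_ok (tensorM (matrix_inv RM) R)
       \<and> \<not> lemma1_clifford_ok (tensorM (matrix_inv RM) R)"
proof -
  let ?N = "CARD('n)"
  have N3: "?N \<ge> 3" using hG by auto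
  note pf = powi_facts[OF q_pos]
  have SO: "spectrum_mat (tensorM RM R) =
              {q ^ 2, q powi (-2), -1, q powi (2 - int CARD('n)), - (q powi (- int CARD('n)))}
          \<and> spectrum_mat (tensorM (matrix_inv RM) R) =
              {- (q ^ 2), - (q powi (-2)), 1, - (q powi (2 - int CARD('n))), q powi (- int CARD('n))}"
    if so: "SOq_braid q R"
  proof -
    have "(SOq_braid q R \<and> (1::real) = 1) \<or> (Spq_braid q R \<and> (1::real) = -1)" using so by simp
    from G_spec[OF q_pos M_ge2 hRM N3 this] show ?thesis
      by (simp only: mult_1_left pf) blast
  qed
  have Sp: "spectrum_mat (tensorM RM R) =
              {q ^ 2, q powi (-2), -1, - (q powi (2 - int CARD('n))), q powi (- int CARD('n))}
          \<and> spectrum_mat (tensorM (matrix_inv RM) R) =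
              {- (q ^ 2), - (q powi (-2)), 1, q powi (2 - int CARD('n)), - (q powi (- int CARD('n)))}"
    if sp: "Spq_braid q R"
  proof -
    have "(SOq_braid q R \<and> (-1::real) = 1) \<or> (Spq_braid q R \<and> (-1::real) = -1)" using sp by simp
    from G_spec[OF q_pos M_ge2 hRM N3 this] show ?thesis
      by (simp only: mult_minus1 pf) blast
  qed
  have D1: "q ^ 2 \<noteq> q powi (-2)"
  proof
    assume "q ^ 2 = q powi (-2)"
    then have "q powi 2 = q powi (-2)" by (simp only: pf)
    then show False using powi_inj[OF q_pos q_ne1] by fastforce
  qed
  have D2: "1 \<noteq> q powi (- int ?N)"
  proof
    assume "1 = q powi (- int ?N)"
    then have "q powi 0 = q powi (- int ?N)" by simp
    then show False using powi_inj[OF q_pos q_ne1] N3 by fastforce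
  qed
  have pos: "0 < q powi k" for k using q_pos by simp
  have T: "two_pos_two_neg (tensorM RM R) \<and> two_pos_two_neg (tensorM (matrix_inv RM) R)"
    using hG
  proof
    assume "?N \<ge> 3 \<and> SOq_braid q R"
    then have s: "spectrum_mat (tensorM RM R) =
              {q ^ 2, q powi (-2), -1, q powi (2 - int CARD('n)), - (q powi (- int CARD('n)))}"
          "spectrum_mat (tensorM (matrix_inv RM) R) =
              {- (q ^ 2), - (q powi (-2)), 1, - (q powi (2 - int CARD('n))), q powi (- int CARD('n))}"
      using SO by auto
    show ?thesis
    proof
      show "two_pos_two_neg (tensorM RM R)"
        by (rule tptn[OF s(1), of "q^2" "q powi (-2)" "-1" "- (q powi (- int ?N))"])
           (use D1 D2 pos q_pos in auto)
      show "two_pos_two_neg (tensorM (matrix_inv RM) R)"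
        by (rule tptn[OF s(2), of 1 "q powi (- int ?N)" "- (q^2)" "- (q powi (-2))"])
           (use D1 D2 pos q_pos in auto)
    qed
  next
    assume h: "even ?N \<and> ?N \<ge> 4 \<and> Spq_braid q R"
    have D3: "1 \<noteq> q powi (2 - int ?N)"
    proof
      assume "1 = q powi (2 - int ?N)"
      then have "q powi 0 = q powi (2 - int ?N)" by simp
      then show False using powi_inj[OF q_pos q_ne1] h by fastforce
    qed
    have s: "spectrum_mat (tensorM RM R) =
              {q ^ 2, q powi (-2), -1, - (q powi (2 - int CARD('n))), q powi (- int CARD('n))}"
          "spectrum_mat (tensorM (matrix_inv RM) R) =
              {- (q ^ 2), - (q powi (-2)), 1, q powi (2 - int CARD('n)), - (q powi (- int CARD('n)))}"
      using Sp h by auto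
    show ?thesis
    proof
      show "two_pos_two_neg (tensorM RM R)"
        by (rule tptn[OF s(1), of "q^2" "q powi (-2)" "-1" "- (q powi (2 - int ?N))"])
           (use D1 D3 pos q_pos in auto)
      show "two_pos_two_neg (tensorM (matrix_inv RM) R)"
        by (rule tptn[OF s(2), of 1 "q powi (2 - int ?N)" "- (q^2)" "- (q powi (-2))"])
           (use D1 D3 pos q_pos in auto)
    qed
  qed
  have W1: "\<not> lemma1_weyl_ok (tensorM RM R) \<and> \<not> lemma1_clifford_ok (tensorM RM R)"
    using T by (intro tptn_not) simp
  have W2: "\<not> lemma1_weyl_ok (tensorM (matrix_inv RM) R) \<and> \<not> lemma1_clifford_ok (tensorM (matrix_inv RM) R)"
    using T by (intro tptn_not) simp
  show ?thesis
    apply (intro conjI impI)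
    subgoal by (rule SO[THEN conjunct1])
    subgoal by (rule SO[THEN conjunct2])
    subgoal by (rule Sp[THEN conjunct1])
    subgoal by (rule Sp[THEN conjunct2])
    subgoal by (rule T[THEN conjunct1])
    subgoal by (rule T[THEN conjunct2])
    subgoal by (rule W1[THEN conjunct1])
    subgoal by (rule W1[THEN conjunct2])
    subgoal by (rule W2[THEN conjunct1])
    subgoal by (rule W2[THEN conjunct2])
    done
qed

end
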